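(* Let $\Omega\subset\mathbb{R}^3$ be a domain with boundary $\partial\Omega$ and outward unit normal $\mathbf{n}$, and consider an isentropic Newtonian fluid on $\Omega$ with state $\boldsymbol{x}=(\rho,\mathbf{v}^{\mathsf T})^{\mathsf T}$ governed by $$\partial_t\rho=-\mathrm{div}\,\mathbf{e}_{\mathbf{v}},\qquad \partial_t\mathbf{v}=-\nabla e_\rho-\frac{1}{\rho}G_{\boldsymbol{\omega}}\mathbf{e}_{\mathbf{v}}-\frac{1}{\rho}\mathrm{Div}\,\boldsymbol{\tau},$$ where the total energy is $\mathcal{H}=\int_\Omega\tfrac12\rho\,\mathbf{v}\cdot\mathbf{v}+\rho\,u(\rho)$ and the efforts are $e_\rho=\delta_\rho\mathcal{H}=\tfrac12\mathbf{v}\cdot\mathbf{v}+h$, $\mathbf{e}_{\mathbf{v}}=\delta_{\mathbf{v}}\mathcal{H}=\rho\mathbf{v}$. Assume the vorticity vanishes on $\partial\Omega$ (the vorticity is a purely internal phenomenon). Then the governing equations can be written as the port-Hamiltonian system with dissipation $$\partial_t\boldsymbol{x}=(\mathcal{J}-\mathcal{G}^{*}S\mathcal{G})\mathbf{e},\quad \mathbf{e}=(e_\rho,\mathbf{e}_{\mathbf{v}}^{\mathsf T})^{\mathsf T},$$ $$\mathcal{J}=\begin{bmatrix}0&-\mathrm{div}\\-\nabla&-\frac{1}{\rho}G_{\boldsymbol{\omega}}\end{bmatrix},\ \mathcal{G}^{*}=\begin{bmatrix}0&0\\0&\mathcal{G}_{\boldsymbol{\tau}}^{*}\end{bmatrix},\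 S=\begin{bmatrix}0&0\\0&S_{\boldsymbol{\tau}}\end{bmatrix},\ \mathcal{G}=\begin{bmatrix}0&0\\0&\mathcal{G}_{\boldsymbol{\tau}}\end{bmatrix},$$ and along solutions $$\frac{d\mathcal{H}}{dt}\leq\int_{\partial\Omega}\mathbf{f}_\partial\,\mathbf{e}_\partial,$$ where $\mathbf{f}_\partial=\big(e_\rho-\tfrac{e_d}{\rho}\big)\big|_{\partial\Omega}$ and $\mathbf{e}_\partial=-(\mathbf{e}_{\mathbf{v}}\cdot\mathbf{n})|_{\partial\Omega}$, with $e_d=\big(\tfrac43\mu+\kappa\big)\,\mathrm{div}(\mathbf{e}_{\mathbf{v}}/\rho)$ the effort associated with dissipation by dilatation.
   Context: Notation: $\rho>0$ density, $\mathbf{v}$ velocity, $u(\rho)$ specific internal energy with $du=-p\,d(1/\rho)$ ($p$ static pressure), $h=u+p/\rho$ enthalpy. Viscous tensor $\boldsymbol{\tau}=-\mu(\mathrm{Grad}\,\mathbf{v}+(\mathrm{Grad}\,\mathbf{v})^{\mathsf T}-\frac23(\mathrm{div}\,\mathbf{v})I)-\kappa(\mathrm{div}\,\mathbf{v})I$ with constant shear and dilatational viscosities $\mu,\kappa\geq0$. Vorticity $\boldsymbol{\omega}=\mathrm{curl}\,\mathbf{v}=(\omega_1,\omega_2,\omega_3)^{\mathsf T}$, gyroscope $G_{\boldsymbol{\omega}}=\begin{bmatrix}0&-\omega_3&\omega_2\\\omega_3&0&-\omega_1\\-\omega_2&\omega_1&0\end{bmatrix}$ (so $G_{\boldsymbol{\omega}}\mathbf{v}=\boldsymbol{\omega}\times\mathbf{v}$).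 Operators: $\mathcal{G}_r\mathbf{w}=\mathrm{curl}(\mathbf{w}/\rho)$, $\mathcal{G}_d\mathbf{w}=\mathrm{div}(\mathbf{w}/\rho)$, $\mathcal{G}_r^{*}\mathbf{z}=\frac1\rho\mathrm{curl}\,\mathbf{z}$, $\mathcal{G}_d^{*}f=-\frac1\rho\nabla f$, $\mathcal{G}_{\boldsymbol{\tau}}=\begin{bmatrix}\mathcal{G}_r\\\mathcal{G}_d\end{bmatrix}$, $\mathcal{G}_{\boldsymbol{\tau}}^{*}=\begin{bmatrix}\mathcal{G}_r^{*}&\mathcal{G}_d^{*}\end{bmatrix}$, $S_{\boldsymbol{\tau}}=\mathrm{diag}(\mu,\tfrac43\mu+\kappa)$. $\mathrm{Grad}$ and $\mathrm{Div}$ are the gradient of a vector field and divergence of a tensor field. *)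

theory Defs
  imports "HOL-Analysis.Analysis"
begin

definition pd :: "3 \<Rightarrow> (real^3 \<Rightarrow> 'b::real_normed_vector) \<Rightarrow> real^3 \<Rightarrow> 'b" where
  "pd i f x = frechet_derivative f (at x) (axis i 1)"

definition grad :: "(real^3 \<Rightarrow> real) \<Rightarrow> real^3 \<Rightarrow> real^3" where
  "grad f x = (\<chi> i. pd i f x)"

definition divg :: "(real^3 \<Rightarrow> real^3) \<Rightarrow> real^3 \<Rightarrow> real" where
  "divg F x = (\<Sum>i\<in>UNIV. pd i (\<lambda>y. F y $ i) x)"

definition curl :: "(real^3 \<Rightarrow> real^3) \<Rightarrow> real^3 \<Rightarrow> real^3" where
  "curl F x = vector
     [pd 2 (\<lambda>y. F y $ 3) x - pd 3 (\<lambda>y. F y $ 2) x,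
      pd 3 (\<lambda>y. F y $ 1) x - pd 1 (\<lambda>y. F y $ 3) x,
      pd 1 (\<lambda>y. F y $ 2) x - pd 2 (\<lambda>y. F y $ 1) x]"

definition Grad :: "(real^3 \<Rightarrow> real^3) \<Rightarrow> real^3 \<Rightarrow> real^3^3" where
  "Grad F x = (\<chi> i j. pd j (\<lambda>y. F y $ i) x)"

definition Div :: "(real^3 \<Rightarrow> real^3^3) \<Rightarrow> real^3 \<Rightarrow> real^3" where
  "Div T x = (\<chi> i. \<Sum>j\<in>UNIV. pd j (\<lambda>y. T y $ i $ j) x)"

text \<open>Gyroscope matrix G_w, so that G_w *v v = w x v.\<close>
definition gyro :: "real^3 \<Rightarrow> real^3^3" where
  "gyro w = vector [vector [0, - (w $ 3), w $ 2],
                    vector [w $ 3, 0, - (w $ 1)],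
                    vector [- (w $ 2), w $ 1, 0]]"

definition tau :: "real \<Rightarrow> real \<Rightarrow> (real^3 \<Rightarrow> real^3) \<Rightarrow> real^3 \<Rightarrow> real^3^3" where
  "tau \<mu> \<kappa> v x =
     - (\<mu> *\<^sub>R (Grad v x + transpose (Grad v x) - ((2/3) * divg v x) *\<^sub>R mat 1))
     - (\<kappa> * divg v x) *\<^sub>R mat 1"

definition C1_on :: "(real^3) set \<Rightarrow> (real^3 \<Rightarrow> 'b::real_normed_vector) \<Rightarrow> bool" where
  "C1_on W F \<longleftrightarrow> F differentiable_on W \<and> (\<forall>i. continuous_on W (pd i F))"

definition C2_on :: "(real^3) set \<Rightarrow> (real^3 \<Rightarrow> 'b::real_normed_vector) \<Rightarrow> bool" where
  "C2_on W F \<longleftrightarrow> C1_on W F \<and> (\<forall>i. C1_on W (pd i F))"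

definition Gr :: "(real^3 \<Rightarrow> real) \<Rightarrow> (real^3 \<Rightarrow> real^3) \<Rightarrow> real^3 \<Rightarrow> real^3" where
  "Gr rho w = curl (\<lambda>y. w y /\<^sub>R rho y)"

definition Gd :: "(real^3 \<Rightarrow> real) \<Rightarrow> (real^3 \<Rightarrow> real^3) \<Rightarrow> real^3 \<Rightarrow> real" where
  "Gd rho w = divg (\<lambda>y. w y /\<^sub>R rho y)"

definition Gr_adj :: "(real^3 \<Rightarrow> real) \<Rightarrow> (real^3 \<Rightarrow> real^3) \<Rightarrow> real^3 \<Rightarrow> real^3" where
  "Gr_adj rho z x = (1 / rho x) *\<^sub>R curl z x"

definition Gd_adj :: "(real^3 \<Rightarrow> real) \<Rightarrow> (real^3 \<Rightarrow> real) \<Rightarrow> real^3 \<Rightarrow> real^3" where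
  "Gd_adj rho f x = - ((1 / rho x) *\<^sub>R grad f x)"

definition G_tau :: "(real^3 \<Rightarrow> real) \<Rightarrow> (real^3 \<Rightarrow> real^3)
                      \<Rightarrow> (real^3 \<Rightarrow> real^3) \<times> (real^3 \<Rightarrow> real)" where
  "G_tau rho w = (Gr rho w, Gd rho w)"

definition G_tau_adj :: "(real^3 \<Rightarrow> real) \<Rightarrow> (real^3 \<Rightarrow> real^3) \<times> (real^3 \<Rightarrow> real)
                          \<Rightarrow> real^3 \<Rightarrow> real^3" where
  "G_tau_adj rho zf = (\<lambda>x. Gr_adj rho (fst zf) x + Gd_adj rho (snd zf) x)"

definition S_tau :: "real \<Rightarrow> real \<Rightarrow> (real^3 \<Rightarrow> real^3) \<times> (real^3 \<Rightarrow> real)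
                      \<Rightarrow> (real^3 \<Rightarrow> real^3) \<times> (real^3 \<Rightarrow> real)" where
  "S_tau \<mu> \<kappa> zf = ((\<lambda>x. \<mu> *\<^sub>R fst zf x), (\<lambda>x. ((4/3) * \<mu> + \<kappa>) * snd zf x))"

type_synonym effort = "(real^3 \<Rightarrow> real) \<times> (real^3 \<Rightarrow> real^3)"
type_synonym dissfield = "(real^3 \<Rightarrow> real) \<times> ((real^3 \<Rightarrow> real^3) \<times> (real^3 \<Rightarrow> real))"

definition J_op :: "(real^3 \<Rightarrow> real) \<Rightarrow> (real^3 \<Rightarrow> real^3) \<Rightarrow> effort \<Rightarrow> effort" where
  "J_op rho omega e =
     ((\<lambda>x. - divg (snd e) x),
      (\<lambda>x. - grad (fst e) x - (1 / rho x) *\<^sub>R (gyro (omega x) *v snd e x)))"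

definition G_full :: "(real^3 \<Rightarrow> real) \<Rightarrow> effort \<Rightarrow> dissfield" where
  "G_full rho e = ((\<lambda>x. 0), G_tau rho (snd e))"

definition S_full :: "real \<Rightarrow> real \<Rightarrow> dissfield \<Rightarrow> dissfield" where
  "S_full \<mu> \<kappa> d = ((\<lambda>x. 0), S_tau \<mu> \<kappa> (snd d))"

definition G_adj_full :: "(real^3 \<Rightarrow> real) \<Rightarrow> dissfield \<Rightarrow> effort" where
  "G_adj_full rho d = ((\<lambda>x. 0), G_tau_adj rho (snd d))"

definition pH_rhs :: "(real^3 \<Rightarrow> real) \<Rightarrow> (real^3 \<Rightarrow> real^3) \<Rightarrow> real \<Rightarrow> real \<Rightarrow> effort \<Rightarrow> effort" where
  "pH_rhs rho omega \<mu> \<kappa> e =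
     (let j = J_op rho omega e; d = G_adj_full rho (S_full \<mu> \<kappa> (G_full rho e))
      in ((\<lambda>x. fst j x - fst d x), (\<lambda>x. snd j x - snd d x)))"

text \<open>Boundary of Omega with outward unit normal n and surface measure sigma,
  characterised by the Gauss divergence theorem for C^1 fields.\<close>
definition gauss_boundary :: "(real^3) set \<Rightarrow> (real^3) measure \<Rightarrow> (real^3 \<Rightarrow> real^3) \<Rightarrow> bool" where
  "gauss_boundary \<Omega> \<sigma> n \<longleftrightarrow>
     finite_measure \<sigma> \<and> space \<sigma> = frontier \<Omega> \<and>
     sets \<sigma> = sets (restrict_space borel (frontier \<Omega>)) \<and>
     continuous_on (frontier \<Omega>) n \<and> (\<forall>x\<in>frontier \<Omega>. norm (n x) = 1) \<and>
     (\<forall>W F. open W \<longrightarrow> closure \<Omega> \<subseteq> W \<longrightarrow> C1_on W F \<longrightarrow>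
        integral \<Omega> (divg F) = (\<integral>x. F x \<bullet> n x \<partial>\<sigma>))"

end

theory Submission
  imports Defs
begin

lemma pd_has: "(f has_derivative f') (at x) \<Longrightarrow> pd i f x = f' (axis i 1)"
  unfolding pd_def using frechet_derivative_at by metis

lemma pd_local:
  assumes "open S" "x \<in> S" "\<And>y. y \<in> S \<Longrightarrow> f y = g y"
  shows "pd i f x = pd i g x"
proof -
  have "(f has_derivative D) (at x) \<longleftrightarrow> (g has_derivative D) (at x)" for D
    using assms has_derivative_transform_within_open[of _ D x UNIV S] by metis
  then show ?thesis unfolding pd_def frechet_derivative_def by simp
qed

lemma pd_works: "f differentiable (at x) \<Longrightarrow> (f has_derivative frechet_derivative f (at x)) (at x)"
  using frechet_derivative_works by blast

lemma pd_bilinear: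
  fixes f :: "real^3 \<Rightarrow> 'a::real_normed_vector" and g :: "real^3 \<Rightarrow> 'b::real_normed_vector"
    and prod :: "'a \<Rightarrow> 'b \<Rightarrow> 'c::real_normed_vector"
  assumes "bounded_bilinear prod" "f differentiable (at x)" "g differentiable (at x)"
  shows "pd i (\<lambda>y. prod (f y) (g y)) x = prod (f x) (pd i g x) + prod (pd i f x) (g x)"
  using bounded_bilinear.FDERIV[OF assms(1) pd_works[OF assms(2)] pd_works[OF assms(3)]]
  by (subst pd_has, assumption) (simp add: pd_def)

lemma pd_linear:
  fixes f :: "real^3 \<Rightarrow> 'a::real_normed_vector" and L :: "'a \<Rightarrow> 'b::real_normed_vector"
  assumes "bounded_linear L" "f differentiable (at x)"
  shows "pd i (\<lambda>y. L (f y)) x = L (pd i f x)"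
  using bounded_linear.has_derivative[OF assms(1) pd_works[OF assms(2)]]
  by (subst pd_has, assumption) (simp add: pd_def)

lemma pd_add:
  assumes "f differentiable (at x)" "g differentiable (at x)"
  shows "pd i (\<lambda>y. f y + g y) x = pd i f x + pd i g x"
  using has_derivative_add[OF pd_works[OF assms(1)] pd_works[OF assms(2)]]
  by (subst pd_has, assumption) (simp add: pd_def)

lemma pd_diff:
  assumes "f differentiable (at x)" "g differentiable (at x)"
  shows "pd i (\<lambda>y. f y - g y) x = pd i f x - pd i g x"
  using has_derivative_diff[OF pd_works[OF assms(1)] pd_works[OF assms(2)]]
  by (subst pd_has, assumption) (simp add: pd_def)

lemma pd_minus:
  assumes "f differentiable (at x)"
  shows "pd i (\<lambda>y. - f y) x = - pd i f x"
  using has_derivative_minus[OF pd_works[OF assms(1)]]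
  by (subst pd_has, assumption) (simp add: pd_def)

lemma pd_const: "pd i (\<lambda>y. c::'a::real_normed_vector) x = 0"
  by (subst pd_has[OF has_derivative_const]) simp

lemma pd_sum:
  assumes "finite A" "\<And>a. a \<in> A \<Longrightarrow> f a differentiable (at x)"
  shows "pd i (\<lambda>y. \<Sum>a\<in>A. f a y) x = (\<Sum>a\<in>A. pd i (f a) x)"
proof -
  have "((\<lambda>y. \<Sum>a\<in>A. f a y) has_derivative (\<lambda>h. \<Sum>a\<in>A. frechet_derivative (f a) (at x) h)) (at x)"
    by (rule has_derivative_sum) (use assms pd_works in auto)
  then show ?thesis by (subst pd_has, assumption) (simp add: pd_def)
qed

lemma pd_comp:
  assumes "f differentiable (at x)"
  shows "pd i (\<lambda>y. f y $ k) x = pd i f x $ k"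
  using pd_linear[OF bounded_linear_vec_nth assms] by simp

lemma pd_scale_const:
  assumes "f differentiable (at x)"
  shows "pd i (\<lambda>y. c *\<^sub>R f y) x = c *\<^sub>R pd i f x"
  using pd_linear[OF bounded_linear_scaleR_right assms] by simp

lemma pd_mult_const:
  fixes f :: "real^3 \<Rightarrow> real"
  assumes "f differentiable (at x)"
  shows "pd i (\<lambda>y. c * f y) x = c * pd i f x"
  using pd_linear[OF bounded_linear_mult_right assms] by simp

lemma pd_mult:
  fixes f g :: "real^3 \<Rightarrow> real"
  assumes "f differentiable (at x)" "g differentiable (at x)"
  shows "pd i (\<lambda>y. f y * g y) x = f x * pd i g x + pd i f x * g x"
  using pd_bilinear[OF bounded_bilinear_mult assms] .

lemma pd_scaleR:
  fixes f :: "real^3 \<Rightarrow> real" and g :: "real^3 \<Rightarrow> 'a::real_normed_vector"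
  assumes "f differentiable (at x)" "g differentiable (at x)"
  shows "pd i (\<lambda>y. f y *\<^sub>R g y) x = f x *\<^sub>R pd i g x + pd i f x *\<^sub>R g x"
  using pd_bilinear[OF bounded_bilinear_scaleR assms] .

lemma pd_inner:
  fixes f g :: "real^3 \<Rightarrow> real^3"
  assumes "f differentiable (at x)" "g differentiable (at x)"
  shows "pd i (\<lambda>y. f y \<bullet> g y) x = f x \<bullet> pd i g x + pd i f x \<bullet> g x"
  using pd_bilinear[OF bounded_bilinear_inner assms] .

lemma pd_line:
  fixes g :: "real^3 \<Rightarrow> real"
  assumes "g differentiable (at (y + s *\<^sub>R axis k 1))"
  shows "((\<lambda>s. g (y + s *\<^sub>R axis k 1)) has_real_derivative pd k g (y + s *\<^sub>R axis k 1)) (at s)"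
proof -
  have l: "((\<lambda>s. y + s *\<^sub>R axis k 1) has_derivative (\<lambda>h. h *\<^sub>R axis k (1::real))) (at s)"
    by (auto intro!: derivative_eq_intros)
  have "((\<lambda>s. g (y + s *\<^sub>R axis k 1)) has_derivative
      (\<lambda>h. frechet_derivative g (at (y + s *\<^sub>R axis k 1)) (h *\<^sub>R axis k 1))) (at s)"
    by (rule has_derivative_compose[OF l pd_works[OF assms]])
  moreover have "linear (frechet_derivative g (at (y + s *\<^sub>R axis k 1)))"
    using pd_works[OF assms] has_derivative_linear by blast
  ultimately show ?thesis
    unfolding has_field_derivative_def pd_def
    by (simp add: linear_cmul mult_commute_abs)
qed

lemma mixed_mvt:
  fixes f :: "real^3 \<Rightarrow> real"
  assumes h: "h > 0"
    and inU: "\<And>s t. 0 \<le> s \<Longrightarrow> s \<le> h \<Longrightarrow> 0 \<le> t \<Longrightarrow> t \<le> h \<Longrightarrow> x + s *\<^sub>R axis i 1 + t *\<^sub>R axis j 1 \<in> U"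
    and df: "\<And>y. y \<in> U \<Longrightarrow> f differentiable (at y)"
    and ddf: "\<And>y. y \<in> U \<Longrightarrow> pd i f differentiable (at y)"
  shows "\<exists>s t. 0 < s \<and> s < h \<and> 0 < t \<and> t < h \<and>
     f (x + h *\<^sub>R axis i 1 + h *\<^sub>R axis j 1) - f (x + h *\<^sub>R axis i 1) - f (x + h *\<^sub>R axis j 1) + f x
       = h * h * pd j (pd i f) (x + s *\<^sub>R axis i 1 + t *\<^sub>R axis j 1)"
proof -
  define ei :: "real^3" where "ei = axis i 1"
  define ej :: "real^3" where "ej = axis j 1"
  have U: "x + s *\<^sub>R ei + t *\<^sub>R ej \<in> U" if "0 \<le> s" "s \<le> h" "0 \<le> t" "t \<le> h" for s t
    using inU that unfolding ei_def ej_def by blast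
  define g where "g s = f ((x + h *\<^sub>R ej) + s *\<^sub>R ei) - f (x + s *\<^sub>R ei)" for s
  have "(g has_real_derivative (pd i f ((x + h *\<^sub>R ej) + s *\<^sub>R ei) - pd i f (x + s *\<^sub>R ei))) (at s)"
    if "0 \<le> s" "s \<le> h" for s
  proof -
    have a: "(x + h *\<^sub>R ej) + s *\<^sub>R ei \<in> U" using U[of s h] that h by (simp add: algebra_simps)
    have b: "x + s *\<^sub>R ei \<in> U" using U[of s 0] that h by simp
    show ?thesis unfolding g_def ei_def
      by (intro DERIV_diff pd_line) (use a b df in \<open>auto simp: ei_def\<close>)
  qed
  from MVT2[OF h, of g, OF this]
  obtain s where s: "0 < s" "s < h"
    and gs: "g h - g 0 = h * (pd i f ((x + h *\<^sub>R ej) + s *\<^sub>R ei) - pd i f (x + s *\<^sub>R ei))"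
    by auto
  define \<phi> where "\<phi> t = pd i f ((x + s *\<^sub>R ei) + t *\<^sub>R ej)" for t
  have "(\<phi> has_real_derivative pd j (pd i f) ((x + s *\<^sub>R ei) + t *\<^sub>R ej)) (at t)"
    if "0 \<le> t" "t \<le> h" for t
    unfolding \<phi>_def ej_def
    by (rule pd_line) (use U[of s t] that s ddf in \<open>auto simp: ej_def\<close>)
  from MVT2[OF h, of \<phi>, OF this]
  obtain t where t: "0 < t" "t < h"
    and pt: "\<phi> h - \<phi> 0 = h * pd j (pd i f) ((x + s *\<^sub>R ei) + t *\<^sub>R ej)"
    by auto
  have "f (x + h *\<^sub>R ei + h *\<^sub>R ej) - f (x + h *\<^sub>R ei) - f (x + h *\<^sub>R ej) + f x = g h - g 0"
    unfolding g_def by (simp add: algebra_simps)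
  also have "\<dots> = h * (\<phi> h - \<phi> 0)"
    unfolding gs \<phi>_def by (simp add: algebra_simps)
  also have "\<dots> = h * h * pd j (pd i f) (x + s *\<^sub>R ei + t *\<^sub>R ej)"
    unfolding pt by simp
  finally show ?thesis using s t unfolding ei_def ej_def by blast
qed

lemma schwarz:
  fixes f :: "real^3 \<Rightarrow> real"
  assumes U: "open U" "x \<in> U"
    and df: "\<And>y. y \<in> U \<Longrightarrow> f differentiable (at y)"
    and ddf: "\<And>k y. y \<in> U \<Longrightarrow> pd k f differentiable (at y)"
    and c1: "continuous_on U (pd j (pd i f))"
    and c2: "continuous_on U (pd i (pd j f))"
  shows "pd j (pd i f) x = pd i (pd j f) x"
proof (rule ccontr)
  assume ne: "pd j (pd i f) x \<noteq> pd i (pd j f) x"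
  define a where "a = pd j (pd i f) x"
  define b where "b = pd i (pd j f) x"
  define e where "e = \<bar>a - b\<bar> / 2"
  have e: "e > 0" using ne unfolding e_def a_def b_def by simp
  obtain d1 where d1: "d1 > 0" "\<And>y. y \<in> U \<Longrightarrow> dist y x < d1 \<Longrightarrow> dist (pd j (pd i f) y) a < e"
    using c1 U e unfolding continuous_on_iff a_def by blast
  obtain d2 where d2: "d2 > 0" "\<And>y. y \<in> U \<Longrightarrow> dist y x < d2 \<Longrightarrow> dist (pd i (pd j f) y) b < e"
    using c2 U e unfolding continuous_on_iff b_def by blast
  obtain d3 where d3: "d3 > 0" "ball x d3 \<subseteq> U" using U open_contains_ball by blast
  define h where "h = min d1 (min d2 d3) / 3"
  have h: "h > 0" using d1 d2 d3 by (simp add: h_def)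
  have small: "x + s *\<^sub>R axis k 1 + t *\<^sub>R axis l 1 \<in> U \<and> dist (x + s *\<^sub>R axis k 1 + t *\<^sub>R axis l 1) x < min d1 (min d2 d3)"
    if "0 \<le> s" "s \<le> h" "0 \<le> t" "t \<le> h" for s t k l
  proof -
    have "dist (x + s *\<^sub>R axis k 1 + t *\<^sub>R axis l 1) x = norm (s *\<^sub>R axis k (1::real) + t *\<^sub>R axis l 1)"
      by (simp add: dist_norm)
    also have "\<dots> \<le> norm (s *\<^sub>R axis k (1::real)) + norm (t *\<^sub>R axis l (1::real))"
      by (rule norm_triangle_ineq)
    also have "\<dots> = s + t" using that by simp
    also have "\<dots> < min d1 (min d2 d3)" using that h unfolding h_def by simp
    finally have *: "dist (x + s *\<^sub>R axis k 1 + t *\<^sub>R axis l 1) x < min d1 (min d2 d3)" .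
    then have "x + s *\<^sub>R axis k 1 + t *\<^sub>R axis l 1 \<in> ball x d3" by (simp add: dist_commute)
    with * d3 show ?thesis by blast
  qed
  obtain s t where st: "0 < s" "s < h" "0 < t" "t < h"
    and E1: "f (x + h *\<^sub>R axis i 1 + h *\<^sub>R axis j 1) - f (x + h *\<^sub>R axis i 1) - f (x + h *\<^sub>R axis j 1) + f x
       = h * h * pd j (pd i f) (x + s *\<^sub>R axis i 1 + t *\<^sub>R axis j 1)"
    using mixed_mvt[OF h, of x i j U f] small df ddf by blast
  obtain s' t' where st': "0 < s'" "s' < h" "0 < t'" "t' < h"
    and E2: "f (x + h *\<^sub>R axis j 1 + h *\<^sub>R axis i 1) - f (x + h *\<^sub>R axis j 1) - f (x + h *\<^sub>R axis i 1) + f x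
       = h * h * pd i (pd j f) (x + s' *\<^sub>R axis j 1 + t' *\<^sub>R axis i 1)"
    using mixed_mvt[OF h, of x j i U f] small df ddf by blast
  have "h * h * pd j (pd i f) (x + s *\<^sub>R axis i 1 + t *\<^sub>R axis j 1) = h * h * pd i (pd j f) (x + s' *\<^sub>R axis j 1 + t' *\<^sub>R axis i 1)"
    using E1 E2 by (simp add: algebra_simps)
  then have eq: "pd j (pd i f) (x + s *\<^sub>R axis i 1 + t *\<^sub>R axis j 1) = pd i (pd j f) (x + s' *\<^sub>R axis j 1 + t' *\<^sub>R axis i 1)"
    using h by simp
  have 1: "dist (pd j (pd i f) (x + s *\<^sub>R axis i 1 + t *\<^sub>R axis j 1)) a < e"
    using d1(2) small[of s t i j] st by auto
  have 2: "dist (pd i (pd j f) (x + s' *\<^sub>R axis j 1 + t' *\<^sub>R axis i 1)) b < e"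
    using d2(2) small[of s' t' j i] st' by auto
  have "dist a b < 2 * e" using 1 2 eq dist_triangle_lt[of a b] by (smt (verit) dist_commute dist_triangle)
  then show False unfolding e_def by (simp add: dist_real_def)
qed

lemma C1D: "open U \<Longrightarrow> C1_on U F \<Longrightarrow> y \<in> U \<Longrightarrow> F differentiable (at y)"
  unfolding C1_on_def using differentiable_on_eq_differentiable_at by blast

lemma C1_cont: "C1_on U F \<Longrightarrow> continuous_on U F"
  unfolding C1_on_def using differentiable_imp_continuous_on by blast

lemma C1I:
  assumes "open U" "\<And>y. y \<in> U \<Longrightarrow> F differentiable (at y)" "\<And>i. continuous_on U (pd i F)"
  shows "C1_on U F"
  unfolding C1_on_def using assms differentiable_on_eq_differentiable_at by blast

lemma diff_local:
  assumes "open S" "y \<in> S" "\<And>z. z \<in> S \<Longrightarrow> f z = g z" "f differentiable (at y)"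
  shows "g differentiable (at y)"
  using assms has_derivative_transform_within_open unfolding differentiable_def by blast

lemma C1_local:
  assumes U: "open U" and eq: "\<And>y. y \<in> U \<Longrightarrow> f y = g y" and f: "C1_on U f"
  shows "C1_on U g"
proof (rule C1I[OF U])
  show "g differentiable (at y)" if "y \<in> U" for y
    using diff_local[OF U that eq C1D[OF U f that]] .
  show "continuous_on U (pd i g)" for i
  proof -
    have "continuous_on U (pd i f)" using f unfolding C1_on_def by blast
    moreover have "pd i f y = pd i g y" if "y \<in> U" for y by (rule pd_local[OF U that]) (rule eq)
    ultimately show ?thesis using continuous_on_cong by blast
  qed
qed

lemma C1_bilinear:
  fixes f :: "real^3 \<Rightarrow> 'a::real_normed_vector" and g :: "real^3 \<Rightarrow> 'b::real_normed_vector"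
    and pr :: "'a \<Rightarrow> 'b \<Rightarrow> 'c::real_normed_vector"
  assumes bb: "bounded_bilinear pr" and U: "open U" and f: "C1_on U f" and g: "C1_on U g"
  shows "C1_on U (\<lambda>y. pr (f y) (g y))"
proof (rule C1I[OF U])
  show "(\<lambda>y. pr (f y) (g y)) differentiable (at y)" if "y \<in> U" for y
    using bounded_bilinear.FDERIV[OF bb pd_works[OF C1D[OF U f that]] pd_works[OF C1D[OF U g that]]]
    unfolding differentiable_def by blast
  show "continuous_on U (pd i (\<lambda>y. pr (f y) (g y)))" for i
  proof -
    have "continuous_on U (\<lambda>y. pr (f y) (pd i g y) + pr (pd i f y) (g y))"
      using C1_cont[OF f] C1_cont[OF g] f g unfolding C1_on_def
      by (intro continuous_on_add bounded_bilinear.continuous_on[OF bb]) auto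
    then show ?thesis
      by (rule continuous_on_cong[THEN iffD1, rotated 2])
         (auto simp: pd_bilinear[OF bb C1D[OF U f] C1D[OF U g]])
  qed
qed

lemma C1_linear:
  fixes f :: "real^3 \<Rightarrow> 'a::real_normed_vector" and L :: "'a \<Rightarrow> 'b::real_normed_vector"
  assumes bl: "bounded_linear L" and U: "open U" and f: "C1_on U f"
  shows "C1_on U (\<lambda>y. L (f y))"
proof (rule C1I[OF U])
  show "(\<lambda>y. L (f y)) differentiable (at y)" if "y \<in> U" for y
    using bounded_linear.has_derivative[OF bl pd_works[OF C1D[OF U f that]]]
    unfolding differentiable_def by blast
  show "continuous_on U (pd i (\<lambda>y. L (f y)))" for i
  proof -
    have "continuous_on U (\<lambda>y. L (pd i f y))"
      using f unfolding C1_on_def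
      by (intro bounded_linear.continuous_on[OF bl]) auto
    then show ?thesis
      by (rule continuous_on_cong[THEN iffD1, rotated 2])
         (auto simp: pd_linear[OF bl C1D[OF U f]])
  qed
qed

lemma C1_const: "open U \<Longrightarrow> C1_on U (\<lambda>y. c)"
  by (rule C1I) (auto simp: pd_const)

lemma C1_add:
  assumes U: "open U" and f: "C1_on U f" and g: "C1_on U g"
  shows "C1_on U (\<lambda>y. f y + g y)"
proof (rule C1I[OF U])
  show "(\<lambda>y. f y + g y) differentiable (at y)" if "y \<in> U" for y
    using C1D[OF U f that] C1D[OF U g that] by (rule differentiable_add)
  show "continuous_on U (pd i (\<lambda>y. f y + g y))" for i
  proof -
    have "continuous_on U (\<lambda>y. pd i f y + pd i g y)"
      using f g unfolding C1_on_def by (intro continuous_on_add) auto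
    then show ?thesis
      by (rule continuous_on_cong[THEN iffD1, rotated 2])
         (auto simp: pd_add[OF C1D[OF U f] C1D[OF U g]])
  qed
qed

lemma C1_minus:
  assumes U: "open U" and f: "C1_on U f"
  shows "C1_on U (\<lambda>y. - f y)"
  using C1_linear[OF bounded_linear_minus[OF bounded_linear_ident] U f] by simp

lemma C1_diff:
  assumes U: "open U" and f: "C1_on U f" and g: "C1_on U g"
  shows "C1_on U (\<lambda>y. f y - g y)"
  using C1_add[OF U f C1_minus[OF U g]] by simp

lemma C1_mult:
  fixes f g :: "real^3 \<Rightarrow> real"
  shows "open U \<Longrightarrow> C1_on U f \<Longrightarrow> C1_on U g \<Longrightarrow> C1_on U (\<lambda>y. f y * g y)"
  using C1_bilinear[OF bounded_bilinear_mult] .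

lemma C1_scaleR:
  fixes f :: "real^3 \<Rightarrow> real" and g :: "real^3 \<Rightarrow> 'a::real_normed_vector"
  shows "open U \<Longrightarrow> C1_on U f \<Longrightarrow> C1_on U g \<Longrightarrow> C1_on U (\<lambda>y. f y *\<^sub>R g y)"
  using C1_bilinear[OF bounded_bilinear_scaleR] .

lemma C1_inner:
  fixes f g :: "real^3 \<Rightarrow> real^3"
  shows "open U \<Longrightarrow> C1_on U f \<Longrightarrow> C1_on U g \<Longrightarrow> C1_on U (\<lambda>y. f y \<bullet> g y)"
  using C1_bilinear[OF bounded_bilinear_inner] .

lemma bounded_bilinear_cross3: "bounded_bilinear cross3"
  using bilinear_cross bilinear_conv_bounded_bilinear by blast

lemma C1_cross:
  fixes f g :: "real^3 \<Rightarrow> real^3"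
  shows "open U \<Longrightarrow> C1_on U f \<Longrightarrow> C1_on U g \<Longrightarrow> C1_on U (\<lambda>y. cross3 (f y) (g y))"
  using C1_bilinear[OF bounded_bilinear_cross3] .

lemma C1_nth:
  fixes F :: "real^3 \<Rightarrow> real^3"
  shows "open U \<Longrightarrow> C1_on U F \<Longrightarrow> C1_on U (\<lambda>y. F y $ k)"
  using C1_linear[OF bounded_linear_vec_nth] .

lemma vec_as_sum: "(F :: real^3) = (\<Sum>k\<in>UNIV. (F $ k) *\<^sub>R axis k 1)"
  by (simp add: vec_eq_iff sum_3 axis_def forall_3)

lemma C1_vec:
  fixes F :: "real^3 \<Rightarrow> real^3"
  assumes U: "open U" and c: "\<And>k. C1_on U (\<lambda>y. F y $ k)"
  shows "C1_on U F"
proof -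
  have "C1_on U (\<lambda>y. (F y $ 1) *\<^sub>R axis (1::3) (1::real) + (F y $ 2) *\<^sub>R axis (2::3) (1::real) + (F y $ 3) *\<^sub>R axis (3::3) (1::real))"
    by (intro C1_add C1_scaleR C1_const c U)
  moreover have "(F y $ 1) *\<^sub>R axis (1::3) (1::real) + (F y $ 2) *\<^sub>R axis (2::3) (1::real) + (F y $ 3) *\<^sub>R axis (3::3) (1::real) = F y" for y
    using vec_as_sum[of "F y"] by (simp add: sum_3)
  ultimately show ?thesis by simp
qed

lemma C1_compose:
  fixes f :: "real^3 \<Rightarrow> real" and \<phi> \<phi>' :: "real \<Rightarrow> real"
  assumes U: "open U" and f: "C1_on U f" and T: "\<And>y. y \<in> U \<Longrightarrow> f y \<in> T"
    and d: "\<And>s. s \<in> T \<Longrightarrow> (\<phi> has_real_derivative \<phi>' s) (at s)"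
    and c: "continuous_on T \<phi>'"
  shows "C1_on U (\<lambda>y. \<phi> (f y))"
proof -
  have D: "((\<lambda>y. \<phi> (f y)) has_derivative (\<lambda>h. frechet_derivative f (at y) h * \<phi>' (f y))) (at y)"
    if "y \<in> U" for y
    by (rule DERIV_compose_FDERIV[OF d[OF T[OF that]] pd_works[OF C1D[OF U f that]]])
  show ?thesis
  proof (rule C1I[OF U])
    show "(\<lambda>y. \<phi> (f y)) differentiable (at y)" if "y \<in> U" for y
      using D[OF that] unfolding differentiable_def by blast
    show "continuous_on U (pd i (\<lambda>y. \<phi> (f y)))" for i
    proof -
      have "continuous_on U (\<lambda>y. pd i f y * \<phi>' (f y))"
        using f unfolding C1_on_def
        by (intro continuous_on_mult continuous_on_compose2[OF c C1_cont[OF f]]) (auto simp: T)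
        moreover have "pd i (\<lambda>y. \<phi> (f y)) x = pd i f x * \<phi>' (f x)" if "x \<in> U" for x
        by (subst pd_has[OF D[OF that]]) (simp add: pd_def)
      ultimately show ?thesis using continuous_on_cong by (metis (no_types, lifting))
    qed
  qed
qed

lemma nth_diff: "F differentiable (at x) \<Longrightarrow> (\<lambda>y. F y $ k) differentiable (at x)"
  using bounded_linear.has_derivative[OF bounded_linear_vec_nth pd_works]
  unfolding differentiable_def by blast

lemma tau_entry:
  "tau \<mu> \<kappa> v y $ k $ j = -(\<mu> * (pd j (\<lambda>z. v z $ k) y + pd k (\<lambda>z. v z $ j) y))
     + ((2/3)*\<mu> - \<kappa>) * (of_bool (k=j) * (\<Sum>m\<in>UNIV. pd m (\<lambda>z. v z $ m) y))"
  by (simp add: tau_def Grad_def transpose_def mat_def divg_def algebra_simps)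

context
  fixes U :: "(real^3) set" and v :: "real^3 \<Rightarrow> real^3"
  assumes U: "open U" and v2: "C2_on U v"
begin

lemma V1: "C1_on U (\<lambda>y. v y $ k)"
  using C1_nth[OF U] v2 unfolding C2_on_def by blast

lemma A1: "C1_on U (pd j (\<lambda>y. v y $ k))"
proof -
  have "C1_on U (\<lambda>y. pd j v y $ k)"
    using C1_nth[OF U] v2 unfolding C2_on_def by blast
  moreover have "pd j v y $ k = pd j (\<lambda>y. v y $ k) y" if "y \<in> U" for y
    using pd_comp[OF C1D[OF U _ that]] v2 unfolding C2_on_def by metis
  ultimately show ?thesis using C1_local[OF U] by metis
qed

lemma Vd: "y \<in> U \<Longrightarrow> (\<lambda>y. v y $ k) differentiable (at y)"
  using C1D[OF U V1] .

lemma Ad: "y \<in> U \<Longrightarrow> pd j (\<lambda>y. v y $ k) differentiable (at y)"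
  using C1D[OF U A1] .

lemma vsym: "y \<in> U \<Longrightarrow> pd i (pd j (\<lambda>y. v y $ k)) y = pd j (pd i (\<lambda>y. v y $ k)) y"
  by (rule schwarz[OF U]) (use Vd Ad A1 in \<open>auto simp: C1_on_def\<close>)

lemma tau_Div:
  assumes x: "x \<in> U"
  shows "Div (tau \<mu> \<kappa> v) x = \<mu> *\<^sub>R curl (curl v) x - ((4/3)*\<mu>+\<kappa>) *\<^sub>R grad (divg v) x"
proof -
  note d = Ad[OF x]
  have ent: "pd j (\<lambda>y. tau \<mu> \<kappa> v y $ k $ j) x =
     -(\<mu> * (pd j (pd j (\<lambda>z. v z $ k)) x + pd j (pd k (\<lambda>z. v z $ j)) x))
     + ((2/3)*\<mu> - \<kappa>) * (of_bool (k=j) * (\<Sum>m\<in>UNIV. pd j (pd m (\<lambda>z. v z $ m)) x))" for j k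
    unfolding tau_entry
    by (simp add: pd_add pd_diff pd_minus pd_mult pd_const pd_sum d)
  have cc: "(\<lambda>y. curl v y $ 1) = (\<lambda>y. pd 2 (\<lambda>z. v z $ 3) y - pd 3 (\<lambda>z. v z $ 2) y)"
           "(\<lambda>y. curl v y $ 2) = (\<lambda>y. pd 3 (\<lambda>z. v z $ 1) y - pd 1 (\<lambda>z. v z $ 3) y)"
           "(\<lambda>y. curl v y $ 3) = (\<lambda>y. pd 1 (\<lambda>z. v z $ 2) y - pd 2 (\<lambda>z. v z $ 1) y)"
    by (simp_all add: curl_def)
  have dv: "divg v = (\<lambda>y. \<Sum>m\<in>UNIV. pd m (\<lambda>z. v z $ m) y)"
    by (simp add: divg_def[abs_def])
  have s: "pd i (pd j (\<lambda>y. v y $ k)) x = pd j (pd i (\<lambda>y. v y $ k)) x" for i j k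
    using vsym[OF x] .
  have s1: "pd 2 (pd 1 (\<lambda>y. v y $ 2)) x = pd 1 (pd 2 (\<lambda>y. v y $ 2)) x"
       "pd 3 (pd 1 (\<lambda>y. v y $ 3)) x = pd 1 (pd 3 (\<lambda>y. v y $ 3)) x"
       "pd 1 (pd 2 (\<lambda>y. v y $ 1)) x = pd 2 (pd 1 (\<lambda>y. v y $ 1)) x"
       "pd 3 (pd 2 (\<lambda>y. v y $ 3)) x = pd 2 (pd 3 (\<lambda>y. v y $ 3)) x"
       "pd 1 (pd 3 (\<lambda>y. v y $ 1)) x = pd 3 (pd 1 (\<lambda>y. v y $ 1)) x"
       "pd 2 (pd 3 (\<lambda>y. v y $ 2)) x = pd 3 (pd 2 (\<lambda>y. v y $ 2)) x"
    using s by blast+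
  show ?thesis
    unfolding vec_eq_iff forall_3
    by (simp add: Div_def ent curl_def[of "curl v"] cc grad_def dv pd_sum pd_add pd_diff d sum_3 s1 algebra_simps)
qed

end

lemma bil_diff:
  fixes f :: "real^3 \<Rightarrow> 'a::real_normed_vector" and g :: "real^3 \<Rightarrow> 'b::real_normed_vector"
    and pr :: "'a \<Rightarrow> 'b \<Rightarrow> 'c::real_normed_vector"
  assumes "bounded_bilinear pr" "f differentiable (at x)" "g differentiable (at x)"
  shows "(\<lambda>y. pr (f y) (g y)) differentiable (at x)"
  using bounded_bilinear.FDERIV[OF assms(1) pd_works[OF assms(2)] pd_works[OF assms(3)]]
  unfolding differentiable_def by blast

lemma cross_diff:
  fixes f g :: "real^3 \<Rightarrow> real^3"
  shows "f differentiable (at x) \<Longrightarrow> g differentiable (at x) \<Longrightarrow> (\<lambda>y. cross3 (f y) (g y)) differentiable (at x)"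
  using bil_diff[OF bounded_bilinear_cross3] .

lemma divg_alt: "F differentiable (at x) \<Longrightarrow> divg F x = (\<Sum>i\<in>UNIV. pd i F x $ i)"
  by (simp add: divg_def pd_comp)

lemma curl_alt: "F differentiable (at x) \<Longrightarrow> curl F x =
   vector [pd 2 F x $ 3 - pd 3 F x $ 2, pd 3 F x $ 1 - pd 1 F x $ 3, pd 1 F x $ 2 - pd 2 F x $ 1]"
  by (simp add: curl_def pd_comp)

lemma divg_add:
  assumes "F differentiable (at x)" "G differentiable (at x)"
  shows "divg (\<lambda>y. F y + G y) x = divg F x + divg G x"
  using assms by (simp add: divg_alt pd_add sum.distrib)

lemma divg_scaleR:
  fixes f :: "real^3 \<Rightarrow> real" and G :: "real^3 \<Rightarrow> real^3"
  assumes "f differentiable (at x)" "G differentiable (at x)"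
  shows "divg (\<lambda>y. f y *\<^sub>R G y) x = f x * divg G x + grad f x \<bullet> G x"
  using assms by (simp add: divg_alt pd_scaleR sum.distrib grad_def inner_vec_def sum_distrib_left)

lemma divg_cross:
  fixes G H :: "real^3 \<Rightarrow> real^3"
  assumes "G differentiable (at x)" "H differentiable (at x)"
  shows "divg (\<lambda>y. cross3 (G y) (H y)) x = H x \<bullet> curl G x - G x \<bullet> curl H x"
proof -
  have "pd i (\<lambda>y. cross3 (G y) (H y)) x = cross3 (G x) (pd i H x) + cross3 (pd i G x) (H x)" for i
    using pd_bilinear[OF bounded_bilinear_cross3 assms] .
  then have "divg (\<lambda>y. cross3 (G y) (H y)) x = (\<Sum>i\<in>UNIV. (cross3 (G x) (pd i H x) + cross3 (pd i G x) (H x)) $ i)"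
    by (simp add: divg_alt[OF cross_diff[OF assms]])
  also have "\<dots> = H x \<bullet> curl G x - G x \<bullet> curl H x"
    using assms by (simp add: curl_alt sum_3 inner_vec_def cross3_def algebra_simps)
  finally show ?thesis .
qed

lemma grad_minus: "f differentiable (at x) \<Longrightarrow> grad (\<lambda>y. - f y) x = - grad f x"
  by (simp add: grad_def pd_minus vec_eq_iff)

lemma grad_cmult: "f differentiable (at x) \<Longrightarrow> grad (\<lambda>y. c * f y) x = c *\<^sub>R grad f x"
  by (simp add: grad_def pd_mult pd_const vec_eq_iff)

lemma grad_const: "grad (\<lambda>y. c) x = 0"
  by (simp add: grad_def pd_const vec_eq_iff)

lemma curl_cscale: "F differentiable (at x) \<Longrightarrow> curl (\<lambda>y. c *\<^sub>R F y) x = c *\<^sub>R curl F x"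
  by (simp add: curl_alt pd_scale_const algebra_simps vec_eq_iff forall_3)

lemma curl_local: "open S \<Longrightarrow> x \<in> S \<Longrightarrow> (\<And>y. y \<in> S \<Longrightarrow> F y = G y) \<Longrightarrow> curl F x = curl G x"
  proof -
  assume a: "open S" "x \<in> S" "\<And>y. y \<in> S \<Longrightarrow> F y = G y"
  have "pd i (\<lambda>y. F y $ k) x = pd i (\<lambda>y. G y $ k) x" for i k by (rule pd_local[OF a(1,2)]) (simp add: a(3))
  then show ?thesis by (simp add: curl_def)
qed

lemma divg_local: "open S \<Longrightarrow> x \<in> S \<Longrightarrow> (\<And>y. y \<in> S \<Longrightarrow> F y = G y) \<Longrightarrow> divg F x = divg G x"
  proof -
  assume a: "open S" "x \<in> S" "\<And>y. y \<in> S \<Longrightarrow> F y = G y"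
  have "pd i (\<lambda>y. F y $ k) x = pd i (\<lambda>y. G y $ k) x" for i k by (rule pd_local[OF a(1,2)]) (simp add: a(3))
  then show ?thesis by (simp add: divg_def)
qed

lemma grad_local: "open S \<Longrightarrow> x \<in> S \<Longrightarrow> (\<And>y. y \<in> S \<Longrightarrow> F y = G y) \<Longrightarrow> grad F x = grad G x"
  proof -
  assume a: "open S" "x \<in> S" "\<And>y. y \<in> S \<Longrightarrow> F y = G y"
  have "pd i F x = pd i G x" for i by (rule pd_local[OF a(1,2)]) (simp add: a(3))
  then show ?thesis by (simp add: grad_def)
qed

lemma gyro_cross: "gyro w *v b = cross3 w b"
  by (simp add: gyro_def cross3_def matrix_vector_mult_def vec_eq_iff forall_3 sum_3)

context
  fixes U :: "(real^3) set" and v :: "real^3 \<Rightarrow> real^3"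
  assumes U: "open U" and v2: "C2_on U v"
begin

lemma curl_C1: "C1_on U (curl v)"
proof (rule C1_vec[OF U])
  fix k :: 3
  have A: "C1_on U (pd j (\<lambda>y. v y $ k))" for j k using A1[OF U v2] .
  show "C1_on U (\<lambda>y. curl v y $ k)"
    using exhaust_3[of k] by (auto simp: curl_def intro!: C1_diff[OF U] A)
qed

lemma divg_C1: "C1_on U (divg v)"
proof -
  have A: "C1_on U (pd j (\<lambda>y. v y $ k))" for j k using A1[OF U v2] .
  have "C1_on U (\<lambda>y. pd 1 (\<lambda>y. v y $ 1) y + pd 2 (\<lambda>y. v y $ 2) y + pd 3 (\<lambda>y. v y $ 3) y)"
    by (intro C1_add[OF U] A)
  then show ?thesis by (simp add: divg_def[abs_def] sum_3)
qed

lemma v_C1: "C1_on U v" using v2 unfolding C2_on_def by blast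

end

lemma cont_integrable:
  fixes g :: "real^3 \<Rightarrow> real"
  assumes K: "compact K" and SK: "S \<subseteq> K" and S: "S \<in> lmeasurable" and c: "continuous_on K g"
  shows "g integrable_on S"
proof -
  obtain B where B: "\<And>x. x \<in> K \<Longrightarrow> norm (g x) \<le> B"
  proof -
    have "bounded (g ` K)" using compact_continuous_image[OF c K] compact_imp_bounded by blast
    then show ?thesis using that unfolding bounded_iff by blast
  qed
  show ?thesis
  proof (rule measurable_bounded_by_integrable_imp_integrable_real)
    show "g \<in> borel_measurable (lebesgue_on S)"
      by (rule continuous_imp_measurable_on_sets_lebesgue[OF continuous_on_subset[OF c SK]])
         (use S in auto)
    show "(\<lambda>x. B) integrable_on S" using integrable_on_const[OF S] .
    show "\<bar>g x\<bar> \<le> B" if "x \<in> S" for x using B[of x] that SK by auto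
    show "S \<in> sets lebesgue" using S by auto
  qed
qed

lemma mvt_bound:
  fixes g g' :: "real \<Rightarrow> real"
  assumes ab: "a < b" and d: "\<And>\<tau>. a \<le> \<tau> \<Longrightarrow> \<tau> \<le> b \<Longrightarrow> (g has_real_derivative g' \<tau>) (at \<tau>)"
    and bd: "\<And>\<tau>. a \<le> \<tau> \<Longrightarrow> \<tau> \<le> b \<Longrightarrow> \<bar>g' \<tau>\<bar> \<le> e"
  shows "\<bar>g b - g a\<bar> \<le> e * (b - a)"
proof -
  obtain z where z: "a < z" "z < b" "g b - g a = (b - a) * g' z"
    using MVT2[OF ab d] by blast
  have "\<bar>g b - g a\<bar> = (b - a) * \<bar>g' z\<bar>" using z ab by (simp add: abs_mult)
  also have "\<dots> \<le> (b - a) * e" using bd[of z] z ab by (intro mult_left_mono) auto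
  finally show ?thesis by (simp add: mult.commute)
qed

lemma deriv_under_integral:
  fixes f ft :: "real \<Rightarrow> real^3 \<Rightarrow> real"
  assumes K: "compact K" and SK: "S \<subseteq> K" and S: "S \<in> lmeasurable"
    and T: "open T" "t0 \<in> T"
    and fd: "\<And>t x. t \<in> T \<Longrightarrow> x \<in> K \<Longrightarrow> ((\<lambda>s. f s x) has_real_derivative ft t x) (at t)"
    and cf: "\<And>t. t \<in> T \<Longrightarrow> continuous_on K (f t)"
    and cft: "continuous_on (T \<times> K) (\<lambda>(t, x). ft t x)"
  shows "((\<lambda>t. integral S (f t)) has_real_derivative integral S (ft t0)) (at t0)"
proof -
  have cft1: "continuous_on K (ft t)" if "t \<in> T" for t
  proof -
    have "continuous_on K ((\<lambda>(t, x). ft t x) \<circ> (\<lambda>x. (t, x)))"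
    proof (rule continuous_on_compose)
      show "continuous_on K (\<lambda>x. (t, x))" by (intro continuous_intros)
      show "continuous_on ((\<lambda>x. (t, x)) ` K) (\<lambda>(t, x). ft t x)"
        by (rule continuous_on_subset[OF cft]) (use that in auto)
    qed
    then show ?thesis by (simp add: o_def)
  qed
  have intf: "f t integrable_on S" if "t \<in> T" for t
    using cont_integrable[OF K SK S cf[OF that]] .
  have intft: "ft t integrable_on S" if "t \<in> T" for t
    using cont_integrable[OF K SK S cft1[OF that]] .
  define M where "M = integral S (\<lambda>x. 1::real)"
  have M: "M \<ge> 0" unfolding M_def
    by (rule integral_nonneg) (auto intro: integrable_on_const[OF S])
  show ?thesis
    unfolding has_field_derivative_iff LIM_eq
  proof (intro allI impI)
    fix r :: real assume r: "r > 0"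
    define e where "e = r / (M + 1)"
    have e: "e > 0" using r M by (simp add: e_def)
    have eM: "e * M < r" using r M unfolding e_def by (simp add: field_simps)
    obtain X0 where X0: "t0 \<in> X0" "open X0"
      and bnd0: "\<forall>t\<in>X0 \<inter> T. \<forall>x\<in>K. dist ((\<lambda>(t, x). ft t x) (t, x)) ((\<lambda>(t, x). ft t x) (t0, x)) \<le> e"
      by (rule continuous_on_prod_compactE[OF cft K T(2) e])
    have bnd: "\<And>t x. t \<in> X0 \<inter> T \<Longrightarrow> x \<in> K \<Longrightarrow> dist (ft t x) (ft t0 x) \<le> e"
      using bnd0 by simp
    obtain s where s: "s > 0" "ball t0 s \<subseteq> X0 \<inter> T"
      using openE[OF open_Int[OF X0(2) T(1)]] X0(1) T(2) by blast
    show "\<exists>s>0. \<forall>t. t \<noteq> t0 \<and> norm (t - t0) < s \<longrightarrow>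
        norm ((integral S (f t) - integral S (f t0)) / (t - t0) - integral S (ft t0)) < r"
    proof (intro exI[of _ s] conjI allI impI s(1))
      fix t assume t: "t \<noteq> t0 \<and> norm (t - t0) < s"
      have tT: "t \<in> T" using t s by (auto simp: dist_norm)
      have pt: "\<bar>f t x - f t0 x - (t - t0) * ft t0 x\<bar> \<le> e * \<bar>t - t0\<bar>" if x: "x \<in> K" for x
      proof -
        define g where "g \<tau> = f \<tau> x - \<tau> * ft t0 x" for \<tau>
        have inb: "\<tau> \<in> ball t0 s" if "min t t0 \<le> \<tau>" "\<tau> \<le> max t t0" for \<tau>
          using that t by (auto simp: dist_norm)
        have gd: "(g has_real_derivative (ft \<tau> x - ft t0 x)) (at \<tau>)"
          if "min t t0 \<le> \<tau>" "\<tau> \<le> max t t0" for \<tau>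
        proof -
          have "\<tau> \<in> T" using inb[OF that] s(2) by blast
          then have "((\<lambda>s. f s x) has_real_derivative ft \<tau> x) (at \<tau>)" using fd x by blast
          then show ?thesis unfolding g_def
            by (intro derivative_eq_intros) auto
        qed
        have gb: "\<bar>ft \<tau> x - ft t0 x\<bar> \<le> e" if "min t t0 \<le> \<tau>" "\<tau> \<le> max t t0" for \<tau>
        proof -
          have "\<tau> \<in> X0 \<inter> T" using inb[OF that] s(2) by blast
          then show ?thesis using bnd[of \<tau> x] x by (simp add: dist_real_def)
        qed
        have "\<bar>g t - g t0\<bar> \<le> e * \<bar>t - t0\<bar>"
        proof (cases "t < t0")
          case True
          then have "\<bar>g t0 - g t\<bar> \<le> e * (t0 - t)"
            by (intro mvt_bound[of t t0 g "\<lambda>\<tau>. ft \<tau> x - ft t0 x" e] gd gb) auto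
          then show ?thesis using True by (simp add: abs_minus_commute)
        next
          case False
          then have "t0 < t" using t by auto
          then have "\<bar>g t - g t0\<bar> \<le> e * (t - t0)"
            by (intro mvt_bound[of t0 t g "\<lambda>\<tau>. ft \<tau> x - ft t0 x" e] gd gb) auto
          then show ?thesis using \<open>t0 < t\<close> by simp
        qed
        then show ?thesis unfolding g_def by (simp add: algebra_simps)
      qed
      have "(integral S (f t) - integral S (f t0)) / (t - t0) - integral S (ft t0)
          = integral S (\<lambda>x. (f t x - f t0 x - (t - t0) * ft t0 x) / (t - t0))"
      proof -
        have "integral S (\<lambda>x. (f t x - f t0 x - (t - t0) * ft t0 x) / (t - t0))
            = integral S (\<lambda>x. (1 / (t - t0)) *\<^sub>R (f t x - f t0 x - (t - t0) * ft t0 x))"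
        proof -
          have "(\<lambda>x. (f t x - f t0 x - (t - t0) * ft t0 x) / (t - t0)) = (\<lambda>x. (1 / (t - t0)) *\<^sub>R (f t x - f t0 x - (t - t0) * ft t0 x))"
            by (rule ext) simp
          then show ?thesis by (rule arg_cong)
        qed
        also have "\<dots> = (1 / (t - t0)) * (integral S (f t) - integral S (f t0) - (t - t0) * integral S (ft t0))"
        proof -
          have i1: "(\<lambda>x. f t x - f t0 x) integrable_on S"
            using intf[OF tT] intf[OF T(2)] by (rule integrable_diff)
          have i2: "(\<lambda>x. (t - t0) * ft t0 x) integrable_on S"
            using integrable_on_cmult_left[OF intft[OF T(2)], of "t - t0"] by simp
          have "integral S (\<lambda>x. f t x - f t0 x - (t - t0) * ft t0 x)
             = integral S (f t) - integral S (f t0) - (t - t0) * integral S (ft t0)"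
            by (subst integral_diff[OF i1 i2], subst integral_diff[OF intf[OF tT] intf[OF T(2)]],
                subst integral_mult[OF intft[OF T(2)], symmetric], rule refl)
          then show ?thesis by simp
        qed
        also have "\<dots> = (integral S (f t) - integral S (f t0)) / (t - t0) - integral S (ft t0)"
          using t by (simp add: field_simps)
        finally show ?thesis by simp
      qed
      also have "norm \<dots> \<le> integral S (\<lambda>x. e)"
      proof (rule integral_norm_bound_integral)
        show "(\<lambda>x. (f t x - f t0 x - (t - t0) * ft t0 x) / (t - t0)) integrable_on S"
          using intf[OF tT] intf[OF T(2)] intft[OF T(2)]
        proof -
          have i1: "(\<lambda>x. f t x - f t0 x) integrable_on S"
            using intf[OF tT] intf[OF T(2)] by (rule integrable_diff)
          have i2: "(\<lambda>x. (t - t0) * ft t0 x) integrable_on S"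
            using integrable_on_cmult_left[OF intft[OF T(2)], of "t - t0"] by simp
          have "(\<lambda>x. f t x - f t0 x - (t - t0) * ft t0 x) integrable_on S"
            using i1 i2 by (rule integrable_diff)
          then show ?thesis using t by simp
        qed
        show "(\<lambda>x. e) integrable_on S" using integrable_on_const[OF S] .
        show "norm ((f t x - f t0 x - (t - t0) * ft t0 x) / (t - t0)) \<le> e" if "x \<in> S" for x
          using pt[of x] that SK t by (auto simp: divide_le_eq)
      qed
      also have "\<dots> = e * M" unfolding M_def
        using integral_mult[OF integrable_on_const[OF S], of e 1] by simp
      finally show "norm ((integral S (f t) - integral S (f t0)) / (t - t0) - integral S (ft t0)) < r"
        using eM by linarith
    qed
  qed
qed

theorem proposition2:
  fixes \<Omega> U :: "(real^3) set" and I :: "real set"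
    and \<sigma> :: "(real^3) measure" and n :: "real^3 \<Rightarrow> real^3"
    and \<mu> \<kappa> :: real
    and u p p' :: "real \<Rightarrow> real"
    and \<rho> \<rho>_t :: "real \<Rightarrow> real^3 \<Rightarrow> real"
    and v v_t :: "real \<Rightarrow> real^3 \<Rightarrow> real^3"
  defines "e_rho \<equiv> (\<lambda>t x. (1/2) * (v t x \<bullet> v t x) + (u (\<rho> t x) + p (\<rho> t x) / \<rho> t x))"
    and "e_v \<equiv> (\<lambda>t x. \<rho> t x *\<^sub>R v t x)"
    and "H \<equiv> (\<lambda>t. integral \<Omega> (\<lambda>x. (1/2) * \<rho> t x * (v t x \<bullet> v t x) + \<rho> t x * u (\<rho> t x)))"
    and "e_d \<equiv> (\<lambda>t x. ((4/3) * \<mu> + \<kappa>) * divg (\<lambda>y. (\<rho> t y *\<^sub>R v t y) /\<^sub>R \<rho> t y) x)"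
  assumes domain: "open \<Omega>" "connected \<Omega>" "bounded \<Omega>"
    and bdry: "gauss_boundary \<Omega> \<sigma> n"
    and visc: "\<mu> \<ge> 0" "\<kappa> \<ge> 0"
    and eos_p: "\<And>r. r > 0 \<Longrightarrow> (p has_real_derivative p' r) (at r)" "continuous_on {0<..} p'"
    and eos_u: "\<And>r. r > 0 \<Longrightarrow> (u has_real_derivative p r / r\<^sup>2) (at r)"
    and I_open: "open I" "is_interval I"
    and U_open: "open U" "closure \<Omega> \<subseteq> U"
    and pos: "\<And>t x. t \<in> I \<Longrightarrow> x \<in> U \<Longrightarrow> \<rho> t x > 0"
    and reg_space: "\<And>t. t \<in> I \<Longrightarrow> C2_on U (\<rho> t) \<and> C2_on U (v t)"
    and reg_cont: "continuous_on (I \<times> U) (\<lambda>(t, x). \<rho> t x)"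
                  "continuous_on (I \<times> U) (\<lambda>(t, x). v t x)"
    and rho_t: "\<And>t x. t \<in> I \<Longrightarrow> x \<in> U \<Longrightarrow> ((\<lambda>s. \<rho> s x) has_real_derivative \<rho>_t t x) (at t)"
    and v_t: "\<And>t x. t \<in> I \<Longrightarrow> x \<in> U \<Longrightarrow> ((\<lambda>s. v s x) has_vector_derivative v_t t x) (at t)"
    and reg_time: "continuous_on (I \<times> U) (\<lambda>(t, x). \<rho>_t t x)"
                  "continuous_on (I \<times> U) (\<lambda>(t, x). v_t t x)"
    and mass: "\<And>t x. t \<in> I \<Longrightarrow> x \<in> \<Omega> \<Longrightarrow> \<rho>_t t x = - divg (e_v t) x"
    and momentum: "\<And>t x. t \<in> I \<Longrightarrow> x \<in> \<Omega> \<Longrightarrow>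
        v_t t x = - grad (e_rho t) x - (1 / \<rho> t x) *\<^sub>R (gyro (curl (v t) x) *v e_v t x)
                  - (1 / \<rho> t x) *\<^sub>R Div (tau \<mu> \<kappa> (v t)) x"
    and vort_bdry: "\<And>t x. t \<in> I \<Longrightarrow> x \<in> frontier \<Omega> \<Longrightarrow> curl (v t) x = 0"
  shows "(\<forall>t\<in>I. \<forall>x\<in>\<Omega>.
            \<rho>_t t x = fst (pH_rhs (\<rho> t) (curl (v t)) \<mu> \<kappa> (e_rho t, e_v t)) x \<and>
            v_t t x = snd (pH_rhs (\<rho> t) (curl (v t)) \<mu> \<kappa> (e_rho t, e_v t)) x)
       \<and> (\<forall>t\<in>I. \<exists>D. (H has_real_derivative D) (at t) \<and>
            D \<le> (\<integral>x. (e_rho t x - e_d t x / \<rho> t x) * (- (e_v t x \<bullet> n x)) \<partial>\<sigma>))"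
proof -
  define c where "c = (4/3) * \<mu> + \<kappa>"
  have c0: "c \<ge> 0" using visc by (simp add: c_def)
  have OU: "\<Omega> \<subseteq> U" using U_open(2) closure_subset by blast
  have FU: "frontier \<Omega> \<subseteq> U" using U_open(2) by (auto simp: frontier_def)
  have rC1: "C1_on U (\<rho> t)" if "t \<in> I" for t using reg_space[OF that] unfolding C2_on_def by blast
  have vC2: "C2_on U (v t)" if "t \<in> I" for t using reg_space[OF that] by blast
  have evv: "e_v t y /\<^sub>R \<rho> t y = v t y" if "t \<in> I" "y \<in> U" for t y
    using pos[OF that] by (simp add: e_v_def)
  have curl_ev: "curl (\<lambda>z. e_v t z /\<^sub>R \<rho> t z) y = curl (v t) y" if "t \<in> I" "y \<in> U" for t y
    by (rule curl_local[OF U_open(1) that(2)]) (simp add: evv that)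
  have divg_ev: "divg (\<lambda>z. e_v t z /\<^sub>R \<rho> t z) y = divg (v t) y" if "t \<in> I" "y \<in> U" for t y
    by (rule divg_local[OF U_open(1) that(2)]) (simp add: evv that)
  have part1: "\<forall>t\<in>I. \<forall>x\<in>\<Omega>.
            \<rho>_t t x = fst (pH_rhs (\<rho> t) (curl (v t)) \<mu> \<kappa> (e_rho t, e_v t)) x \<and>
            v_t t x = snd (pH_rhs (\<rho> t) (curl (v t)) \<mu> \<kappa> (e_rho t, e_v t)) x"
  proof (intro ballI conjI)
    fix t x assume t: "t \<in> I" and x: "x \<in> \<Omega>"
    have xU: "x \<in> U" using x OU by blast
    show "\<rho>_t t x = fst (pH_rhs (\<rho> t) (curl (v t)) \<mu> \<kappa> (e_rho t, e_v t)) x"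
      by (simp add: pH_rhs_def J_op_def G_adj_full_def Let_def mass[OF t x])
    have L1: "curl (\<lambda>y. \<mu> *\<^sub>R Gr (\<rho> t) (e_v t) y) x = \<mu> *\<^sub>R curl (curl (v t)) x"
    proof -
      have "curl (\<lambda>y. \<mu> *\<^sub>R Gr (\<rho> t) (e_v t) y) x = curl (\<lambda>y. \<mu> *\<^sub>R curl (v t) y) x"
        by (rule curl_local[OF U_open(1) xU]) (simp add: Gr_def curl_ev t)
      also have "\<dots> = \<mu> *\<^sub>R curl (curl (v t)) x"
        by (rule curl_cscale[OF C1D[OF U_open(1) curl_C1[OF U_open(1) vC2[OF t]] xU]])
      finally show ?thesis .
    qed
    have L2: "grad (\<lambda>y. c * Gd (\<rho> t) (e_v t) y) x = c *\<^sub>R grad (divg (v t)) x"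
    proof -
      have "grad (\<lambda>y. c * Gd (\<rho> t) (e_v t) y) x = grad (\<lambda>y. c * divg (v t) y) x"
        by (rule grad_local[OF U_open(1) xU]) (simp add: Gd_def divg_ev t)
      also have "\<dots> = c *\<^sub>R grad (divg (v t)) x"
        by (rule grad_cmult[OF C1D[OF U_open(1) divg_C1[OF U_open(1) vC2[OF t]] xU]])
      finally show ?thesis .
    qed
    have TD: "Div (tau \<mu> \<kappa> (v t)) x = \<mu> *\<^sub>R curl (curl (v t)) x - c *\<^sub>R grad (divg (v t)) x"
      unfolding c_def by (rule tau_Div[OF U_open(1) vC2[OF t] xU])
    show "v_t t x = snd (pH_rhs (\<rho> t) (curl (v t)) \<mu> \<kappa> (e_rho t, e_v t)) x"
      using L1 L2[unfolded c_def]
      by (simp add: pH_rhs_def J_op_def G_adj_full_def S_full_def G_full_def G_tau_adj_def S_tau_def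
          G_tau_def Gr_adj_def Gd_adj_def Let_def momentum[OF t x] TD c_def algebra_simps)
  qed

  have Ucl: "closure \<Omega> \<subseteq> U" using U_open(2) .
  have Kc: "compact (closure \<Omega>)" using domain(3) by (simp add: compact_closure)
  have Sl: "\<Omega> \<in> lmeasurable"
    using bounded_set_imp_lmeasurable[OF domain(3)] domain(1)
    by (metis borel_open sets_completionI_sets sets_lborel)
  have uc: "continuous_on {0<..} u"
    using eos_u by (meson DERIV_isCont continuous_at_imp_continuous_on greaterThan_iff)
  have pc: "continuous_on {0<..} p"
    using eos_p(1) by (meson DERIV_isCont continuous_at_imp_continuous_on greaterThan_iff)
  define f where "f t x = (1/2) * \<rho> t x * (v t x \<bullet> v t x) + \<rho> t x * u (\<rho> t x)" for t x
  define ft where "ft t x = \<rho>_t t x * e_rho t x + e_v t x \<bullet> v_t t x" for t x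
  have H_eq: "H = (\<lambda>t. integral \<Omega> (f t))" by (simp add: H_def f_def[abs_def])
  have fd: "((\<lambda>s. f s x) has_real_derivative ft t x) (at t)" if t: "t \<in> I" and x: "x \<in> closure \<Omega>" for t x
  proof -
    have xU: "x \<in> U" using x Ucl by blast
    have r: "\<rho> t x > 0" using pos[OF t xU] .
    have hr: "((\<lambda>s. \<rho> s x) has_real_derivative \<rho>_t t x) (at t)" using rho_t[OF t xU] .
    have hv: "((\<lambda>s. v s x) has_derivative (\<lambda>h. h *\<^sub>R v_t t x)) (at t)"
      using v_t[OF t xU] by (simp add: has_vector_derivative_def)
    have hvv: "((\<lambda>s. v s x \<bullet> v s x) has_real_derivative 2 * (v t x \<bullet> v_t t x)) (at t)"
    proof -
      have "((\<lambda>s. v s x \<bullet> v s x) has_derivative (\<lambda>h. v t x \<bullet> (h *\<^sub>R v_t t x) + (h *\<^sub>R v_t t x) \<bullet> v t x)) (at t)"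
        by (rule has_derivative_inner[OF hv hv])
      moreover have "(\<lambda>h. v t x \<bullet> (h *\<^sub>R v_t t x) + (h *\<^sub>R v_t t x) \<bullet> v t x) = (*) (2 * (v t x \<bullet> v_t t x))"
        by (auto simp: fun_eq_iff inner_commute algebra_simps)
      ultimately show ?thesis by (simp add: has_field_derivative_def)
    qed
    have hu: "((\<lambda>s. u (\<rho> s x)) has_real_derivative p (\<rho> t x) / (\<rho> t x)\<^sup>2 * \<rho>_t t x) (at t)"
      by (rule DERIV_chain2[OF eos_u[OF r] hr])
    have D: "((\<lambda>s. f s x) has_real_derivative
       ((1/2) * \<rho> t x * (2 * (v t x \<bullet> v_t t x)) + (1/2) * \<rho>_t t x * (v t x \<bullet> v t x)
        + (\<rho> t x * (p (\<rho> t x) / (\<rho> t x)\<^sup>2 * \<rho>_t t x) + \<rho>_t t x * u (\<rho> t x)))) (at t)"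
      unfolding f_def by (rule DERIV_add[OF DERIV_mult'[OF DERIV_cmult[OF hr] hvv] DERIV_mult'[OF hr hu]])
    show ?thesis
    proof (rule DERIV_cong[OF D])
      show "(1/2) * \<rho> t x * (2 * (v t x \<bullet> v_t t x)) + (1/2) * \<rho>_t t x * (v t x \<bullet> v t x)
        + (\<rho> t x * (p (\<rho> t x) / (\<rho> t x)\<^sup>2 * \<rho>_t t x) + \<rho>_t t x * u (\<rho> t x)) = ft t x"
        using r by (simp add: ft_def e_rho_def e_v_def field_simps power2_eq_square)
    qed
  qed
  have rc: "continuous_on U (\<rho> t)" if "t \<in> I" for t using C1_cont[OF rC1[OF that]] .
  have vc: "continuous_on U (v t)" if "t \<in> I" for t using C1_cont[OF v_C1[OF U_open(1) vC2[OF that]]] .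
  have cf: "continuous_on (closure \<Omega>) (f t)" if t: "t \<in> I" for t
  proof -
    have "continuous_on U (\<lambda>x. u (\<rho> t x))"
      by (rule continuous_on_compose2[OF uc rc[OF t]]) (use pos[OF t] in auto)
    then have "continuous_on U (f t)"
      unfolding f_def[abs_def] using rc[OF t] vc[OF t] by (intro continuous_intros) auto
    then show ?thesis using continuous_on_subset Ucl by blast
  qed
  have cRU: "continuous_on (I \<times> U) (\<lambda>z. \<rho> (fst z) (snd z))" using reg_cont(1) by (simp add: case_prod_beta)
  have cVU: "continuous_on (I \<times> U) (\<lambda>z. v (fst z) (snd z))" using reg_cont(2) by (simp add: case_prod_beta)
  have cRtU: "continuous_on (I \<times> U) (\<lambda>z. \<rho>_t (fst z) (snd z))" using reg_time(1) by (simp add: case_prod_beta)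
  have cVtU: "continuous_on (I \<times> U) (\<lambda>z. v_t (fst z) (snd z))" using reg_time(2) by (simp add: case_prod_beta)
  have posz: "\<And>z. z \<in> I \<times> U \<Longrightarrow> \<rho> (fst z) (snd z) > 0" using pos by auto
  have cuU: "continuous_on (I \<times> U) (\<lambda>z. u (\<rho> (fst z) (snd z)))"
    by (rule continuous_on_compose2[OF uc cRU]) (use posz in auto)
  have cpU: "continuous_on (I \<times> U) (\<lambda>z. p (\<rho> (fst z) (snd z)))"
    by (rule continuous_on_compose2[OF pc cRU]) (use posz in auto)
  have cft: "continuous_on (I \<times> closure \<Omega>) (\<lambda>(t, x). ft t x)"
  proof -
    have "continuous_on (I \<times> U) (\<lambda>z. ft (fst z) (snd z))"
      unfolding ft_def e_rho_def e_v_def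
      using cRU cVU cRtU cVtU cuU cpU posz
      by (intro continuous_intros) (auto, metis less_irrefl pos)
    then have "continuous_on (I \<times> closure \<Omega>) (\<lambda>z. ft (fst z) (snd z))"
      by (rule continuous_on_subset) (use Ucl in auto)
    then show ?thesis by (simp add: case_prod_beta)
  qed
  have part2: "\<forall>t\<in>I. \<exists>D. (H has_real_derivative D) (at t) \<and>
            D \<le> (\<integral>x. (e_rho t x - e_d t x / \<rho> t x) * (- (e_v t x \<bullet> n x)) \<partial>\<sigma>)"
  proof
    fix t0 assume t0: "t0 \<in> I"
    have HD: "(H has_real_derivative integral \<Omega> (ft t0)) (at t0)"
      unfolding H_eq
      by (rule deriv_under_integral[OF Kc closure_subset Sl I_open(1) t0 fd cf cft])
    have le: "integral \<Omega> (ft t0) \<le> (\<integral>x. (e_rho t0 x - e_d t0 x / \<rho> t0 x) * (- (e_v t0 x \<bullet> n x)) \<partial>\<sigma>)"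
    proof -
      define w where "w = v t0"
      define E where "E = e_rho t0"
      define ev where "ev = e_v t0"
      define r where "r = \<rho> t0"
      have U: "open U" using U_open(1) .
      have wC2: "C2_on U w" unfolding w_def using vC2[OF t0] .
      have wC1: "C1_on U w" using v_C1[OF U wC2] .
      have rC: "C1_on U r" unfolding r_def using rC1[OF t0] .
      have rpos: "\<And>y. y \<in> U \<Longrightarrow> r y > 0" unfolding r_def using pos[OF t0] .
      have cu: "C1_on U (\<lambda>y. u (r y))"
      proof (rule C1_compose[OF U rC, of "{0<..}" u "\<lambda>s. p s / s\<^sup>2"])
        show "continuous_on {0<..} (\<lambda>s. p s / s\<^sup>2)" using pc by (intro continuous_intros) auto
      qed (use rpos eos_u in auto)
      have cp: "C1_on U (\<lambda>y. p (r y))"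
        by (rule C1_compose[OF U rC, of "{0<..}" p p']) (use rpos eos_p in auto)
      have ci: "C1_on U (\<lambda>y. 1 / r y)"
      proof (rule C1_compose[OF U rC, of "{0<..}" "\<lambda>s. 1 / s" "\<lambda>s. - (1 / s\<^sup>2)"])
        show "continuous_on {0<..} (\<lambda>s::real. - (1 / s\<^sup>2))" by (intro continuous_intros) auto
        show "((\<lambda>s. 1 / s) has_real_derivative - (1 / s\<^sup>2)) (at s)" if "s \<in> {0<..}" for s :: real
          using that by (auto intro!: derivative_eq_intros simp: power2_eq_square)
      qed (use rpos in auto)
      have Eeq: "E = (\<lambda>y. (1/2) * (w y \<bullet> w y) + (u (r y) + p (r y) * (1 / r y)))"
        by (simp add: E_def e_rho_def w_def r_def fun_eq_iff)
      have Ec: "C1_on U E" unfolding Eeq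
        by (intro C1_add[OF U] C1_mult[OF U] C1_const[OF U] C1_inner[OF U] wC1 cu cp ci)
      have eveq: "ev = (\<lambda>y. r y *\<^sub>R w y)" by (simp add: ev_def e_v_def r_def w_def fun_eq_iff)
      have evc: "C1_on U ev" unfolding eveq by (intro C1_scaleR[OF U] rC wC1)
      have curlC: "C1_on U (curl w)" using curl_C1[OF U wC2] .
      have divC: "C1_on U (divg w)" using divg_C1[OF U wC2] .
      define F where "F y = (- E y) *\<^sub>R ev y + (- \<mu>) *\<^sub>R cross3 (curl w y) (w y) + (c * divg w y) *\<^sub>R w y" for y
      have FC: "C1_on U F" unfolding F_def[abs_def]
        by (intro C1_add[OF U] C1_scaleR[OF U] C1_minus[OF U] C1_const[OF U] C1_cross[OF U]
            C1_mult[OF U] Ec evc curlC divC wC1)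
      have Gauss: "integral \<Omega> (divg F) = (\<integral>x. F x \<bullet> n x \<partial>\<sigma>)"
        using bdry U_open FC unfolding gauss_boundary_def by blast
      have pw: "ft t0 x \<le> divg F x" if x: "x \<in> \<Omega>" for x
      proof -
        have xU: "x \<in> U" using x OU by blast
        have rx: "r x > 0" using rpos[OF xU] .
        have Ed: "E differentiable (at x)" using C1D[OF U Ec xU] .
        have evd: "ev differentiable (at x)" using C1D[OF U evc xU] .
        have cd: "curl w differentiable (at x)" using C1D[OF U curlC xU] .
        have dd: "divg w differentiable (at x)" using C1D[OF U divC xU] .
        have wd: "w differentiable (at x)" using C1D[OF U wC1 xU] .
        have Ad: "(\<lambda>y. (- E y) *\<^sub>R ev y) differentiable (at x)" using Ed evd by simp
        have Bd: "(\<lambda>y. (- \<mu>) *\<^sub>R cross3 (curl w y) (w y)) differentiable (at x)"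
          using cross_diff[OF cd wd] by simp
        have Cd: "(\<lambda>y. (c * divg w y) *\<^sub>R w y) differentiable (at x)" using dd wd by simp
        have "divg F x = divg (\<lambda>y. (- E y) *\<^sub>R ev y + (- \<mu>) *\<^sub>R cross3 (curl w y) (w y)) x
                        + divg (\<lambda>y. (c * divg w y) *\<^sub>R w y) x"
          unfolding F_def by (rule divg_add[OF differentiable_add[OF Ad Bd] Cd])
        also have "\<dots> = divg (\<lambda>y. (- E y) *\<^sub>R ev y) x + divg (\<lambda>y. (- \<mu>) *\<^sub>R cross3 (curl w y) (w y)) x
                        + divg (\<lambda>y. (c * divg w y) *\<^sub>R w y) x"
          using divg_add[OF Ad Bd] by simp
        also have "divg (\<lambda>y. (- E y) *\<^sub>R ev y) x = (- E x) * divg ev x - grad E x \<bullet> ev x"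
          using divg_scaleR[of "\<lambda>y. - E y" x ev] Ed evd grad_minus[OF Ed] by simp
        also have "divg (\<lambda>y. (- \<mu>) *\<^sub>R cross3 (curl w y) (w y)) x
            = (- \<mu>) * (w x \<bullet> curl (curl w) x - curl w x \<bullet> curl w x)"
          using divg_scaleR[of "\<lambda>y. - \<mu>" x "\<lambda>y. cross3 (curl w y) (w y)"] cross_diff[OF cd wd]
            grad_const[of "- \<mu>" x] divg_cross[OF cd wd] by simp
        also have "divg (\<lambda>y. (c * divg w y) *\<^sub>R w y) x = c * divg w x * divg w x + c * (grad (divg w) x \<bullet> w x)"
          using divg_scaleR[of "\<lambda>y. c * divg w y" x w] dd wd grad_cmult[OF dd, of c] by simp
        finally have dF: "divg F x = (- E x) * divg ev x - grad E x \<bullet> ev x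
            + (- \<mu>) * (w x \<bullet> curl (curl w) x - curl w x \<bullet> curl w x)
            + (c * divg w x * divg w x + c * (grad (divg w) x \<bullet> w x))" .
        have TD: "Div (tau \<mu> \<kappa> w) x = \<mu> *\<^sub>R curl (curl w) x - c *\<^sub>R grad (divg w) x"
          unfolding c_def by (rule tau_Div[OF U wC2 xU])
        have ms: "\<rho>_t t0 x = - divg ev x" unfolding ev_def using mass[OF t0 x] .
        have mo: "v_t t0 x = - grad E x - (1 / r x) *\<^sub>R (cross3 (curl w x) (ev x))
                  - (1 / r x) *\<^sub>R (\<mu> *\<^sub>R curl (curl w) x - c *\<^sub>R grad (divg w) x)"
          using momentum[OF t0 x] TD unfolding E_def[symmetric] ev_def[symmetric] r_def[symmetric] w_def[symmetric]
          by (simp add: gyro_cross)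
        have evx: "ev x = r x *\<^sub>R w x" using eveq by simp
        have cr0: "ev x \<bullet> cross3 (curl w x) (ev x) = 0" by (simp add: dot_cross_self)
        have ftx: "ft t0 x = divg F x - (\<mu> * (curl w x \<bullet> curl w x) + c * (divg w x * divg w x))"
        proof -
          have "ft t0 x = \<rho>_t t0 x * E x + ev x \<bullet> v_t t0 x"
            by (simp add: ft_def E_def ev_def)
          also have "\<dots> = - divg ev x * E x - ev x \<bullet> grad E x - (1 / r x) * (ev x \<bullet> cross3 (curl w x) (ev x))
                  - (1 / r x) * (\<mu> * (ev x \<bullet> curl (curl w) x) - c * (ev x \<bullet> grad (divg w) x))"
            unfolding ms mo by (simp add: inner_diff_right inner_add_right algebra_simps)
          also have "\<dots> = - divg ev x * E x - ev x \<bullet> grad E x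
                  - (\<mu> * (w x \<bullet> curl (curl w) x) - c * (w x \<bullet> grad (divg w) x))"
            unfolding cr0 using rx by (simp add: evx field_simps)
          also have "\<dots> = divg F x - (\<mu> * (curl w x \<bullet> curl w x) + c * (divg w x * divg w x))"
            unfolding dF by (simp add: inner_commute algebra_simps)
          finally show ?thesis .
        qed
        have "0 \<le> \<mu> * (curl w x \<bullet> curl w x) + c * (divg w x * divg w x)"
        proof -
          have a: "0 \<le> curl w x \<bullet> curl w x" by simp
          have b: "0 \<le> divg w x * divg w x" by simp
          show ?thesis using visc(1) c0 a b by (simp add: add_nonneg_nonneg mult_nonneg_nonneg)
        qed
        then show ?thesis using ftx by linarith
      qed
      have cftc: "continuous_on (closure \<Omega>) (ft t0)"
      proof -
        have "continuous_on (closure \<Omega>) ((\<lambda>(t, x). ft t x) \<circ> (\<lambda>x. (t0, x)))"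
        proof (rule continuous_on_compose)
          show "continuous_on (closure \<Omega>) (\<lambda>x. (t0, x))" by (intro continuous_intros)
          show "continuous_on ((\<lambda>x. (t0, x)) ` closure \<Omega>) (\<lambda>(t, x). ft t x)"
            by (rule continuous_on_subset[OF cft]) (use t0 in auto)
        qed
        then show ?thesis by (simp add: o_def)
      qed
      have int1: "ft t0 integrable_on \<Omega>" using cont_integrable[OF Kc closure_subset Sl cftc] .
      have cdF: "continuous_on (closure \<Omega>) (divg F)"
      proof -
        have "continuous_on U (\<lambda>y. \<Sum>i\<in>UNIV. pd i F y $ i)"
          using FC unfolding C1_on_def by (intro continuous_intros) auto
        moreover have "divg F y = (\<Sum>i\<in>UNIV. pd i F y $ i)" if "y \<in> U" for y
          using divg_alt[OF C1D[OF U FC that]] .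
        ultimately have "continuous_on U (divg F)" using continuous_on_cong by (metis (no_types, lifting))
        then show ?thesis using continuous_on_subset Ucl by blast
      qed
      have int2: "divg F integrable_on \<Omega>" using cont_integrable[OF Kc closure_subset Sl cdF] .
      have "integral \<Omega> (ft t0) \<le> integral \<Omega> (divg F)"
        by (rule integral_le[OF int1 int2 pw])
      also have "\<dots> = (\<integral>x. F x \<bullet> n x \<partial>\<sigma>)" using Gauss .
      also have "\<dots> = (\<integral>x. (e_rho t0 x - e_d t0 x / \<rho> t0 x) * (- (e_v t0 x \<bullet> n x)) \<partial>\<sigma>)"
      proof (rule Bochner_Integration.integral_cong[OF refl])
        fix x assume "x \<in> space \<sigma>"
        then have xF: "x \<in> frontier \<Omega>" using bdry unfolding gauss_boundary_def by blast
        then have xU: "x \<in> U" using FU by blast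
        have om: "curl w x = 0" unfolding w_def using vort_bdry[OF t0 xF] .
        have ed: "e_d t0 x = c * divg w x"
          unfolding e_d_def c_def w_def
          by (rule arg_cong[where f="\<lambda>z. ((4/3) * \<mu> + \<kappa>) * z"], rule divg_local[OF U xU])
             (simp add: pos[OF t0, THEN order.strict_implies_not_eq, symmetric])
        have rx: "r x > 0" using rpos[OF xU] .
        show "F x \<bullet> n x = (e_rho t0 x - e_d t0 x / \<rho> t0 x) * (- (e_v t0 x \<bullet> n x))"
          using rx unfolding F_def om ed E_def[symmetric] ev_def[symmetric] r_def[symmetric]
          by (simp add: eveq inner_diff_left inner_add_left field_simps)
      qed
      finally show ?thesis .
    qed
    show "\<exists>D. (H has_real_derivative D) (at t0) \<and>
            D \<le> (\<integral>x. (e_rho t0 x - e_d t0 x / \<rho> t0 x) * (- (e_v t0 x \<bullet> n x)) \<partial>\<sigma>)"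
      using HD le by blast
  qed
  show ?thesis using part1 part2 by blast
qed

end
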